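(* Let $(X,d,f)$ be a TDS. If $\widetilde h_{top}(f,X)=h_{top}(f,X)$, then $$h_{top}(f,X)=\lim_{\varepsilon\to0}\lim_{\alpha\to0}h^\alpha_{top}(f,X,\varepsilon)=\sup_{\varepsilon>0}\inf_{\alpha>0}h^\alpha_{top}(f,X,\varepsilon).$$
   Context: A TDS $(X,d,f)$: compact metric space and continuous $f$; $h_{top}(f,X)$ is the classical topological entropy. $d_n^\alpha(x,y)=\max_{0\le i\le n-1}e^{\alpha i}d(f^ix,f^iy)$; $r_n(f,\alpha,X,\varepsilon)$ is the minimal cardinality of a set $E$ such that every $x\in X$ has $y\in E$ with $d_n^\alpha(x,y)<\varepsilon$; $h^\alpha_{top}(f,X,\varepsilon)=\limsup_{n\to\infty}\frac1n\log r_n(f,\alpha,X,\varepsilon)$. Neutralized topological entropy: $B_n(x,r)=\{y:d(f^jx,f^jy)<r,\ 0\le j\le n-1\}$; $r_n(X,e^{-n\varepsilon})$ is the smallest number of balls $B_n(x,e^{-n\varepsilon})$ needed to cover $X$; $\widetilde h_{top}(f,X,\varepsilon)=\limsup_{n\to\infty}\frac1n\log r_n(X,e^{-n\varepsilon})$ and $\widetilde h_{top}(f,X)=\lim_{\varepsilon\to0}\widetilde h_{top}(f,X,\varepsilon)$. *)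

theory Defs
  imports "HOL-Analysis.Analysis"
begin

definition alpha_bowen_dist ::
  "('a::metric_space \<Rightarrow> 'a) \<Rightarrow> real \<Rightarrow> nat \<Rightarrow> 'a \<Rightarrow> 'a \<Rightarrow> real" where
  "alpha_bowen_dist f \<alpha> n x y =
     Max ((\<lambda>i. exp (\<alpha> * real i) * dist ((f ^^ i) x) ((f ^^ i) y)) ` {..<n})"

definition alpha_span_num ::
  "('a::metric_space \<Rightarrow> 'a) \<Rightarrow> real \<Rightarrow> 'a set \<Rightarrow> real \<Rightarrow> nat \<Rightarrow> nat" where
  "alpha_span_num f \<alpha> X \<epsilon> n =
     Inf {card E | E. finite E \<and> E \<subseteq> X \<and>
                     (\<forall>x\<in>X. \<exists>y\<in>E. alpha_bowen_dist f \<alpha> n x y < \<epsilon>)}"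

definition alpha_entropy ::
  "('a::metric_space \<Rightarrow> 'a) \<Rightarrow> 'a set \<Rightarrow> real \<Rightarrow> real \<Rightarrow> ereal" where
  "alpha_entropy f X \<alpha> \<epsilon> =
     limsup (\<lambda>n. ereal (ln (real (alpha_span_num f \<alpha> X \<epsilon> n)) / real n))"

definition bowen_ball ::
  "('a::metric_space \<Rightarrow> 'a) \<Rightarrow> nat \<Rightarrow> 'a \<Rightarrow> real \<Rightarrow> 'a set" where
  "bowen_ball f n x r = {y. \<forall>j<n. dist ((f ^^ j) x) ((f ^^ j) y) < r}"

definition bowen_cover_num ::
  "('a::metric_space \<Rightarrow> 'a) \<Rightarrow> 'a set \<Rightarrow> nat \<Rightarrow> real \<Rightarrow> nat" where
  "bowen_cover_num f X n r =
     Inf {card E | E. finite E \<and> E \<subseteq> X \<and> X \<subseteq> (\<Union>x\<in>E. bowen_ball f n x r)}"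

definition top_entropy :: "('a::metric_space \<Rightarrow> 'a) \<Rightarrow> 'a set \<Rightarrow> ereal" where
  "top_entropy f X =
     Lim (at_right (0::real))
       (\<lambda>\<epsilon>. limsup (\<lambda>n. ereal (ln (real (bowen_cover_num f X n \<epsilon>)) / real n)))"

definition neutral_entropy_eps :: "('a::metric_space \<Rightarrow> 'a) \<Rightarrow> 'a set \<Rightarrow> real \<Rightarrow> ereal" where
  "neutral_entropy_eps f X \<epsilon> =
     limsup (\<lambda>n. ereal (ln (real (bowen_cover_num f X n (exp (- real n * \<epsilon>)))) / real n))"

definition neutral_entropy :: "('a::metric_space \<Rightarrow> 'a) \<Rightarrow> 'a set \<Rightarrow> ereal" where
  "neutral_entropy f X = Lim (at_right (0::real)) (neutral_entropy_eps f X)"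

end

theory Submission
  imports Defs
begin

lemma funpow_cont:
  assumes "continuous_on X f" "f ` X \<subseteq> X"
  shows "continuous_on X (f ^^ i) \<and> (f ^^ i) ` X \<subseteq> X"
proof (induction i)
  case 0 then show ?case by (simp add: continuous_on_id)
next
  case (Suc i)
  then have c: "continuous_on X (f ^^ i)" and s: "(f ^^ i) ` X \<subseteq> X" by auto
  have "continuous_on X (f \<circ> (f ^^ i))"
    by (rule continuous_on_compose[OF c continuous_on_subset[OF assms(1) s]])
  moreover have "(f \<circ> (f ^^ i)) ` X \<subseteq> X" using s assms(2) by auto
  ultimately show ?case by simp
qed

lemma bowen_lt_iff:
  assumes "n > 0"
  shows "alpha_bowen_dist f \<alpha> n x y < \<epsilon> \<longleftrightarrow>
     (\<forall>i<n. exp (\<alpha> * real i) * dist ((f ^^ i) x) ((f ^^ i) y) < \<epsilon>)"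
  unfolding alpha_bowen_dist_def using assms
  by (subst Max_less_iff) auto

lemma span_exists:
  fixes X :: "'a::metric_space set"
  assumes "compact X" "continuous_on X f" "f ` X \<subseteq> X" "\<epsilon> > 0" "n > 0"
  shows "\<exists>E. finite E \<and> E \<subseteq> X \<and> (\<forall>x\<in>X. \<exists>y\<in>E. alpha_bowen_dist f \<alpha> n x y < \<epsilon>)"
proof -
  define U where "U y = (\<Inter>i\<in>{..<n}. X \<inter> (\<lambda>x. exp (\<alpha> * real i) * dist ((f ^^ i) x) ((f ^^ i) y)) -` {..<\<epsilon>})" for y
  have op: "openin (top_of_set X) (U y)" for y
    unfolding U_def
  proof (rule openin_INT2)
    fix i assume "i \<in> {..<n}"
    have "continuous_on X (f ^^ i)" using funpow_cont[OF assms(2,3)] by blast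
    then have "continuous_on X (\<lambda>x. exp (\<alpha> * real i) * dist ((f ^^ i) x) ((f ^^ i) y))"
      by (intro continuous_intros)
    then show "openin (top_of_set X) (X \<inter> (\<lambda>x. exp (\<alpha> * real i) * dist ((f ^^ i) x) ((f ^^ i) y)) -` {..<\<epsilon>})"
      by (rule continuous_openin_preimage_gen) simp
  qed (use assms in auto)
  have cov: "X \<subseteq> \<Union> (U ` X)"
    using assms(4,5) by (auto simp: U_def)
  obtain D where D: "D \<subseteq> U ` X" "finite D" "X \<subseteq> \<Union>D"
    using assms(1) op cov unfolding compact_eq_openin_cover by (metis imageE)
  obtain E where E: "E \<subseteq> X" "finite E" "D = U ` E"
    using finite_subset_image[OF D(2) D(1)] by blast
  show ?thesis
  proof (intro exI conjI ballI)
    fix x assume "x \<in> X"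
    then obtain y where "y \<in> E" "x \<in> U y" using D(3) E(3) by auto
    then show "\<exists>y\<in>E. alpha_bowen_dist f \<alpha> n x y < \<epsilon>"
      using assms(5) by (intro bexI[of _ y]) (auto simp: U_def bowen_lt_iff lessThan_empty_iff split: if_splits)
  qed (use E in auto)
qed

lemma Inf_nat_le_aux:
  fixes S S' :: "nat set"
  assumes "S \<noteq> {}" "\<And>a. a \<in> S \<Longrightarrow> \<exists>b\<in>S'. b \<le> a"
  shows "Inf S' \<le> Inf S"
proof -
  have "Inf S \<in> S" using Inf_nat_def1[OF assms(1)] .
  then obtain b where "b \<in> S'" "b \<le> Inf S" using assms(2) by blast
  moreover have "Inf S' \<le> b" using \<open>b \<in> S'\<close> by (simp add: cInf_lower)
  ultimately show ?thesis by simp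
qed

lemma limsup_ln_mono:
  fixes a b :: "nat \<Rightarrow> nat"
  assumes "eventually (\<lambda>n. a n \<le> b n) sequentially"
  shows "limsup (\<lambda>n. ereal (ln (real (a n)) / real n)) \<le> limsup (\<lambda>n. ereal (ln (real (b n)) / real n))"
proof (rule Limsup_mono)
  show "eventually (\<lambda>n. ereal (ln (real (a n)) / real n) \<le> ereal (ln (real (b n)) / real n)) sequentially"
    using assms
  proof (rule eventually_mono)
    fix n assume "a n \<le> b n"
    have "ln (real (a n)) \<le> ln (real (b n))"
    proof (cases "a n = 0")
      case True then show ?thesis using \<open>a n \<le> b n\<close> by (cases "b n") auto
    next
      case False then show ?thesis using \<open>a n \<le> b n\<close> by simp
    qed
    then show "ereal (ln (real (a n)) / real n) \<le> ereal (ln (real (b n)) / real n)"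
      by (simp add: divide_right_mono)
  qed
qed

lemma mono_at_right_INF:
  fixes g :: "real \<Rightarrow> 'b::{complete_linorder, linorder_topology}"
  assumes "\<And>s t. 0 < s \<Longrightarrow> s \<le> t \<Longrightarrow> g s \<le> g t"
  shows "(g \<longlongrightarrow> (INF t\<in>{0<..}. g t)) (at_right 0)"
proof (rule order_tendstoI)
  fix y assume "y < (INF t\<in>{0<..}. g t)"
  then have "\<forall>t>0. y < g t" by (simp add: less_INF_D)
  then show "eventually (\<lambda>t. y < g t) (at_right 0)"
    by (auto simp: eventually_at_right_field intro: exI[of _ 1])
next
  fix y assume "(INF t\<in>{0<..}. g t) < y"
  then obtain x where x: "x > 0" "g x < y" by (auto simp: INF_less_iff)
  show "eventually (\<lambda>t. g t < y) (at_right 0)"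
    unfolding eventually_at_right_field
    using x assms by (intro exI[of _ x]) (meson le_less_trans less_imp_le)
qed

lemma anti_at_right_SUP:
  fixes g :: "real \<Rightarrow> 'b::{complete_linorder, linorder_topology}"
  assumes "\<And>s t. 0 < s \<Longrightarrow> s \<le> t \<Longrightarrow> g t \<le> g s"
  shows "(g \<longlongrightarrow> (SUP t\<in>{0<..}. g t)) (at_right 0)"
proof (rule order_tendstoI)
  fix y assume "(SUP t\<in>{0<..}. g t) > y"
  then obtain x where x: "x > 0" "g x > y" by (auto simp: less_SUP_iff)
  show "eventually (\<lambda>t. y < g t) (at_right 0)"
    unfolding eventually_at_right_field
    using x assms by (intro exI[of _ x]) (meson less_le_trans less_imp_le)
next
  fix y assume "(SUP t\<in>{0<..}. g t) < y"
  then have "\<forall>t>0. g t < y" by (meson SUP_upper greaterThan_iff le_less_trans)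
  then show "eventually (\<lambda>t. g t < y) (at_right 0)"
    by (auto simp: eventually_at_right_field intro: exI[of _ 1])
qed

lemma cover_exists:
  fixes X :: "'a::metric_space set"
  assumes "compact X" "continuous_on X f" "f ` X \<subseteq> X" "r > 0" "n > 0"
  shows "\<exists>E. finite E \<and> E \<subseteq> X \<and> X \<subseteq> (\<Union>x\<in>E. bowen_ball f n x r)"
proof -
  obtain E where E: "finite E" "E \<subseteq> X" "\<forall>x\<in>X. \<exists>y\<in>E. alpha_bowen_dist f 0 n x y < r"
    using span_exists[OF assms, of 0] by blast
  have "X \<subseteq> (\<Union>x\<in>E. bowen_ball f n x r)"
  proof
    fix x assume "x \<in> X"
    then obtain y where "y \<in> E" "alpha_bowen_dist f 0 n x y < r" using E(3) by blast
    then show "x \<in> (\<Union>x\<in>E. bowen_ball f n x r)"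
      using assms(5) \<open>y \<in> E\<close> by (auto simp: bowen_lt_iff bowen_ball_def dist_commute intro!: bexI[of _ y])
  qed
  then show ?thesis using E by blast
qed

context
  fixes X :: "'a::metric_space set" and f :: "'a \<Rightarrow> 'a"
  assumes cX: "compact X" and cf: "continuous_on X f" and fX: "f ` X \<subseteq> X"
begin

lemma cover_mono:
  assumes "0 < r1" "r1 \<le> r2" "n > 0"
  shows "bowen_cover_num f X n r2 \<le> bowen_cover_num f X n r1"
  unfolding bowen_cover_num_def
proof (rule Inf_nat_le_aux)
  show "{card E |E. finite E \<and> E \<subseteq> X \<and> X \<subseteq> (\<Union>x\<in>E. bowen_ball f n x r1)} \<noteq> {}"
    using cover_exists[OF cX cf fX assms(1,3)] by blast
next
  fix a assume "a \<in> {card E |E. finite E \<and> E \<subseteq> X \<and> X \<subseteq> (\<Union>x\<in>E. bowen_ball f n x r1)}"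
  then obtain E where E: "a = card E" "finite E" "E \<subseteq> X" "X \<subseteq> (\<Union>x\<in>E. bowen_ball f n x r1)" by blast
  have "X \<subseteq> (\<Union>x\<in>E. bowen_ball f n x r2)"
  proof
    fix x assume "x \<in> X"
    then obtain y where "y \<in> E" "x \<in> bowen_ball f n y r1" using E(4) by blast
    then show "x \<in> (\<Union>x\<in>E. bowen_ball f n x r2)"
    proof -
      have "x \<in> bowen_ball f n y r2" unfolding bowen_ball_def
      proof (intro CollectI allI impI)
        fix j assume "j < n"
        then have "dist ((f ^^ j) y) ((f ^^ j) x) < r1"
          using \<open>x \<in> bowen_ball f n y r1\<close> unfolding bowen_ball_def by blast
        then show "dist ((f ^^ j) y) ((f ^^ j) x) < r2" using assms(2) by linarith
      qed
      then show ?thesis using \<open>y \<in> E\<close> by blast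
    qed
  qed
  then show "\<exists>b\<in>{card E |E. finite E \<and> E \<subseteq> X \<and> X \<subseteq> (\<Union>x\<in>E. bowen_ball f n x r2)}. b \<le> a"
    using E by blast
qed

lemma H_mono_alpha:
  assumes "0 < \<epsilon>" "\<alpha> \<le> \<beta>"
  shows "alpha_entropy f X \<alpha> \<epsilon> \<le> alpha_entropy f X \<beta> \<epsilon>"
  unfolding alpha_entropy_def
proof (rule limsup_ln_mono)
  show "eventually (\<lambda>n. alpha_span_num f \<alpha> X \<epsilon> n \<le> alpha_span_num f \<beta> X \<epsilon> n) sequentially"
    using eventually_gt_at_top[of 0]
  proof (rule eventually_mono)
    fix n :: nat assume n: "n > 0"
    show "alpha_span_num f \<alpha> X \<epsilon> n \<le> alpha_span_num f \<beta> X \<epsilon> n"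
      unfolding alpha_span_num_def
    proof (rule Inf_nat_le_aux)
      show "{card E |E. finite E \<and> E \<subseteq> X \<and> (\<forall>x\<in>X. \<exists>y\<in>E. alpha_bowen_dist f \<beta> n x y < \<epsilon>)} \<noteq> {}"
        using span_exists[OF cX cf fX assms(1) n, where \<alpha>=\<beta>] by blast
    next
      fix a assume "a \<in> {card E |E. finite E \<and> E \<subseteq> X \<and> (\<forall>x\<in>X. \<exists>y\<in>E. alpha_bowen_dist f \<beta> n x y < \<epsilon>)}"
      then obtain E where E: "a = card E" "finite E" "E \<subseteq> X" "\<forall>x\<in>X. \<exists>y\<in>E. alpha_bowen_dist f \<beta> n x y < \<epsilon>" by blast
      have "\<forall>x\<in>X. \<exists>y\<in>E. alpha_bowen_dist f \<alpha> n x y < \<epsilon>"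
      proof
        fix x assume "x \<in> X"
        then obtain y where y: "y \<in> E" "alpha_bowen_dist f \<beta> n x y < \<epsilon>" using E(4) by blast
        have "exp (\<alpha> * real i) * dist ((f ^^ i) x) ((f ^^ i) y) < \<epsilon>" if "i < n" for i
        proof -
          have "exp (\<alpha> * real i) * dist ((f ^^ i) x) ((f ^^ i) y) \<le> exp (\<beta> * real i) * dist ((f ^^ i) x) ((f ^^ i) y)"
            using mult_right_mono[OF assms(2), of "real i"] by (intro mult_right_mono) simp_all
          also have "\<dots> < \<epsilon>" using y(2) that n by (simp add: bowen_lt_iff)
          finally show ?thesis .
        qed
        then show "\<exists>y\<in>E. alpha_bowen_dist f \<alpha> n x y < \<epsilon>" using y(1) n by (intro bexI[of _ y]) (simp_all add: bowen_lt_iff)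
      qed
      then show "\<exists>b\<in>{card E |E. finite E \<and> E \<subseteq> X \<and> (\<forall>x\<in>X. \<exists>y\<in>E. alpha_bowen_dist f \<alpha> n x y < \<epsilon>)}. b \<le> a"
        using E by blast
    qed
  qed
qed

lemma H_anti_eps:
  assumes "0 < \<epsilon>1" "\<epsilon>1 \<le> \<epsilon>2"
  shows "alpha_entropy f X \<alpha> \<epsilon>2 \<le> alpha_entropy f X \<alpha> \<epsilon>1"
  unfolding alpha_entropy_def
proof (rule limsup_ln_mono)
  show "eventually (\<lambda>n. alpha_span_num f \<alpha> X \<epsilon>2 n \<le> alpha_span_num f \<alpha> X \<epsilon>1 n) sequentially"
    using eventually_gt_at_top[of 0]
  proof (rule eventually_mono)
    fix n :: nat assume n: "n > 0"
    show "alpha_span_num f \<alpha> X \<epsilon>2 n \<le> alpha_span_num f \<alpha> X \<epsilon>1 n"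
      unfolding alpha_span_num_def
    proof (rule Inf_nat_le_aux)
      show "{card E |E. finite E \<and> E \<subseteq> X \<and> (\<forall>x\<in>X. \<exists>y\<in>E. alpha_bowen_dist f \<alpha> n x y < \<epsilon>1)} \<noteq> {}"
        using span_exists[OF cX cf fX assms(1) n, where \<alpha>=\<alpha>] by blast
    next
      fix a assume "a \<in> {card E |E. finite E \<and> E \<subseteq> X \<and> (\<forall>x\<in>X. \<exists>y\<in>E. alpha_bowen_dist f \<alpha> n x y < \<epsilon>1)}"
      then obtain E where E: "a = card E" "finite E" "E \<subseteq> X" "\<forall>x\<in>X. \<exists>y\<in>E. alpha_bowen_dist f \<alpha> n x y < \<epsilon>1" by blast
      have "\<forall>x\<in>X. \<exists>y\<in>E. alpha_bowen_dist f \<alpha> n x y < \<epsilon>2"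
      proof
        fix x assume "x \<in> X"
        then obtain y where "y \<in> E" "alpha_bowen_dist f \<alpha> n x y < \<epsilon>1" using E(4) by blast
        then show "\<exists>y\<in>E. alpha_bowen_dist f \<alpha> n x y < \<epsilon>2" using assms(2) by (intro bexI[of _ y]) auto
      qed
      then show "\<exists>b\<in>{card E |E. finite E \<and> E \<subseteq> X \<and> (\<forall>x\<in>X. \<exists>y\<in>E. alpha_bowen_dist f \<alpha> n x y < \<epsilon>2)}. b \<le> a"
        using E by blast
    qed
  qed
qed

lemma h_le_H:
  assumes "0 < \<epsilon>" "0 \<le> \<alpha>"
  shows "limsup (\<lambda>n. ereal (ln (real (bowen_cover_num f X n \<epsilon>)) / real n)) \<le> alpha_entropy f X \<alpha> \<epsilon>"
  unfolding alpha_entropy_def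
proof (rule limsup_ln_mono)
  show "eventually (\<lambda>n. bowen_cover_num f X n \<epsilon> \<le> alpha_span_num f \<alpha> X \<epsilon> n) sequentially"
    using eventually_gt_at_top[of 0]
  proof (rule eventually_mono)
    fix n :: nat assume n: "n > 0"
    show "bowen_cover_num f X n \<epsilon> \<le> alpha_span_num f \<alpha> X \<epsilon> n"
      unfolding alpha_span_num_def bowen_cover_num_def
    proof (rule Inf_nat_le_aux)
      show "{card E |E. finite E \<and> E \<subseteq> X \<and> (\<forall>x\<in>X. \<exists>y\<in>E. alpha_bowen_dist f \<alpha> n x y < \<epsilon>)} \<noteq> {}"
        using span_exists[OF cX cf fX assms(1) n, where \<alpha>=\<alpha>] by blast
    next
      fix a assume "a \<in> {card E |E. finite E \<and> E \<subseteq> X \<and> (\<forall>x\<in>X. \<exists>y\<in>E. alpha_bowen_dist f \<alpha> n x y < \<epsilon>)}"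
      then obtain E where E: "a = card E" "finite E" "E \<subseteq> X" "\<forall>x\<in>X. \<exists>y\<in>E. alpha_bowen_dist f \<alpha> n x y < \<epsilon>" by blast
      have "X \<subseteq> (\<Union>x\<in>E. bowen_ball f n x \<epsilon>)"
      proof
        fix x assume "x \<in> X"
        then obtain y where y: "y \<in> E" "alpha_bowen_dist f \<alpha> n x y < \<epsilon>" using E(4) by blast
        have "dist ((f ^^ j) y) ((f ^^ j) x) < \<epsilon>" if "j < n" for j
        proof -
          have "dist ((f ^^ j) y) ((f ^^ j) x) \<le> exp (\<alpha> * real j) * dist ((f ^^ j) x) ((f ^^ j) y)"
            using assms(2) by (simp add: dist_commute mult_le_cancel_right1)
          also have "\<dots> < \<epsilon>" using y(2) that n by (simp add: bowen_lt_iff)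
          finally show ?thesis .
        qed
        then show "x \<in> (\<Union>x\<in>E. bowen_ball f n x \<epsilon>)" using y(1) by (auto simp: bowen_ball_def)
      qed
      then show "\<exists>b\<in>{card E |E. finite E \<and> E \<subseteq> X \<and> X \<subseteq> (\<Union>x\<in>E. bowen_ball f n x \<epsilon>)}. b \<le> a"
        using E by blast
    qed
  qed
qed


lemma NE_mono:
  assumes "0 < a" "a \<le> b"
  shows "neutral_entropy_eps f X a \<le> neutral_entropy_eps f X b"
  unfolding neutral_entropy_eps_def
proof (rule limsup_ln_mono)
  show "eventually (\<lambda>n. bowen_cover_num f X n (exp (- real n * a)) \<le> bowen_cover_num f X n (exp (- real n * b))) sequentially"
    using eventually_gt_at_top[of "0::nat"]
  proof (rule eventually_mono)
    fix n :: nat assume n: "n > 0"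
    have "exp (- real n * b) \<le> exp (- real n * a)"
      using assms(2) by (simp add: mult_left_mono)
    then show "bowen_cover_num f X n (exp (- real n * a)) \<le> bowen_cover_num f X n (exp (- real n * b))"
      by (intro cover_mono n) auto
  qed
qed

lemma H_le_NE:
  assumes "0 < \<alpha>" "0 < \<epsilon>"
  shows "alpha_entropy f X \<alpha> \<epsilon> \<le> neutral_entropy_eps f X (2 * \<alpha>)"
  unfolding alpha_entropy_def neutral_entropy_eps_def
proof (rule limsup_ln_mono)
  obtain N :: nat where N: "- ln \<epsilon> / \<alpha> < real N" using reals_Archimedean2 by blast
  show "eventually (\<lambda>n. alpha_span_num f \<alpha> X \<epsilon> n \<le> bowen_cover_num f X n (exp (- real n * (2 * \<alpha>)))) sequentially"
    unfolding eventually_at_top_linorder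
  proof (intro exI[of _ "Suc N"] allI impI)
    fix n :: nat assume nN: "Suc N \<le> n"
    then have n: "n > 0" by simp
    define r where "r = exp (- real n * (2 * \<alpha>))"
    have r: "r > 0" by (simp add: r_def)
    have "- ln \<epsilon> / \<alpha> < real n" using N nN by linarith
    then have "- ln \<epsilon> < \<alpha> * real n" using assms(1) by (metis mult.commute pos_divide_less_eq)
    then have "- (\<alpha> * real n) < ln \<epsilon>" by linarith
    then have "exp (- (\<alpha> * real n)) < \<epsilon>" using assms(2)
      by (metis exp_less_cancel_iff exp_ln)
    moreover have "exp (\<alpha> * real n) * r = exp (- (\<alpha> * real n))"
      unfolding r_def by (simp add: exp_add[symmetric] algebra_simps)
    ultimately have key: "exp (\<alpha> * real n) * r < \<epsilon>" by simp
    show "alpha_span_num f \<alpha> X \<epsilon> n \<le> bowen_cover_num f X n (exp (- real n * (2 * \<alpha>)))"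
      unfolding alpha_span_num_def bowen_cover_num_def r_def[symmetric]
    proof (rule Inf_nat_le_aux)
      show "{card E |E. finite E \<and> E \<subseteq> X \<and> X \<subseteq> (\<Union>x\<in>E. bowen_ball f n x r)} \<noteq> {}"
        using cover_exists[OF cX cf fX r n] by blast
    next
      fix a assume "a \<in> {card E |E. finite E \<and> E \<subseteq> X \<and> X \<subseteq> (\<Union>x\<in>E. bowen_ball f n x r)}"
      then obtain E where E: "a = card E" "finite E" "E \<subseteq> X" "X \<subseteq> (\<Union>x\<in>E. bowen_ball f n x r)" by blast
      have "\<forall>x\<in>X. \<exists>y\<in>E. alpha_bowen_dist f \<alpha> n x y < \<epsilon>"
      proof
        fix x assume "x \<in> X"
        then obtain y where y: "y \<in> E" "x \<in> bowen_ball f n y r" using E(4) by blast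
        have "exp (\<alpha> * real i) * dist ((f ^^ i) x) ((f ^^ i) y) < \<epsilon>" if "i < n" for i
        proof -
          have d: "dist ((f ^^ i) x) ((f ^^ i) y) < r"
            using y(2) that unfolding bowen_ball_def by (simp add: dist_commute)
          have "exp (\<alpha> * real i) * dist ((f ^^ i) x) ((f ^^ i) y) \<le> exp (\<alpha> * real i) * r"
            using d by (intro mult_left_mono) simp_all
          also have "\<dots> \<le> exp (\<alpha> * real n) * r"
            using that assms(1) r by (intro mult_right_mono) simp_all
          also have "\<dots> < \<epsilon>" by (rule key)
          finally show ?thesis .
        qed
        then show "\<exists>y\<in>E. alpha_bowen_dist f \<alpha> n x y < \<epsilon>"
          using y(1) n by (intro bexI[of _ y]) (simp_all add: bowen_lt_iff)
      qed
      then show "\<exists>b\<in>{card E |E. finite E \<and> E \<subseteq> X \<and> (\<forall>x\<in>X. \<exists>y\<in>E. alpha_bowen_dist f \<alpha> n x y < \<epsilon>)}. b \<le> a"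
        using E by blast
    qed
  qed
qed

end

theorem mainTheorem14:
  fixes X :: "'a::metric_space set" and f :: "'a \<Rightarrow> 'a"
  assumes "compact X" and "continuous_on X f" and "f ` X \<subseteq> X"
    and "neutral_entropy f X = top_entropy f X"
  shows "(\<forall>\<epsilon>>0. ((\<lambda>\<alpha>. alpha_entropy f X \<alpha> \<epsilon>)
              \<longlongrightarrow> Lim (at_right 0) (\<lambda>\<alpha>. alpha_entropy f X \<alpha> \<epsilon>)) (at_right 0))
       \<and> ((\<lambda>\<epsilon>. Lim (at_right 0) (\<lambda>\<alpha>. alpha_entropy f X \<alpha> \<epsilon>))
              \<longlongrightarrow> top_entropy f X) (at_right 0)
       \<and> top_entropy f X = (SUP \<epsilon>\<in>{0<..}. INF \<alpha>\<in>{0<..}. alpha_entropy f X \<alpha> \<epsilon>)"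
proof -
  note A = assms(1,2,3)
  define h where "h = (\<lambda>\<epsilon>. limsup (\<lambda>n. ereal (ln (real (bowen_cover_num f X n \<epsilon>)) / real n)))"
  define g where "g = (\<lambda>\<epsilon>. INF \<alpha>\<in>{0<..}. alpha_entropy f X \<alpha> \<epsilon>)"
  have h_anti: "h t \<le> h s" if "0 < s" "s \<le> t" for s t
    unfolding h_def
  proof (rule limsup_ln_mono)
    show "eventually (\<lambda>n. bowen_cover_num f X n t \<le> bowen_cover_num f X n s) sequentially"
      using eventually_gt_at_top[of "0::nat"]
      by (rule eventually_mono) (rule cover_mono[OF A that])
  qed
  have T: "top_entropy f X = (SUP \<epsilon>\<in>{0<..}. h \<epsilon>)"
    unfolding top_entropy_def h_def[symmetric]
    by (rule tendsto_Lim[OF trivial_limit_at_right_real anti_at_right_SUP]) (rule h_anti)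
  have N: "neutral_entropy f X = (INF a\<in>{0<..}. neutral_entropy_eps f X a)"
    unfolding neutral_entropy_def
    by (rule tendsto_Lim[OF trivial_limit_at_right_real mono_at_right_INF]) (rule NE_mono[OF A])
  have Hlim: "((\<lambda>\<alpha>. alpha_entropy f X \<alpha> \<epsilon>) \<longlongrightarrow> g \<epsilon>) (at_right 0)" if "\<epsilon> > 0" for \<epsilon>
    unfolding g_def by (rule mono_at_right_INF) (rule H_mono_alpha[OF A that])
  have HLim: "Lim (at_right 0) (\<lambda>\<alpha>. alpha_entropy f X \<alpha> \<epsilon>) = g \<epsilon>" if "\<epsilon> > 0" for \<epsilon>
    by (rule tendsto_Lim[OF trivial_limit_at_right_real Hlim[OF that]])
  have hg: "h \<epsilon> \<le> g \<epsilon>" if "\<epsilon> > 0" for \<epsilon>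
    unfolding g_def h_def by (rule INF_greatest) (rule h_le_H[OF A that], simp)
  have gN: "g \<epsilon> \<le> neutral_entropy f X" if "\<epsilon> > 0" for \<epsilon>
    unfolding N
  proof (rule INF_greatest)
    fix a :: real assume "a \<in> {0<..}"
    then have a: "a / 2 > 0" by simp
    have "g \<epsilon> \<le> alpha_entropy f X (a / 2) \<epsilon>"
      unfolding g_def using a by (intro INF_lower) simp
    also have "\<dots> \<le> neutral_entropy_eps f X (2 * (a / 2))"
      by (rule H_le_NE[OF A a that])
    finally show "g \<epsilon> \<le> neutral_entropy_eps f X a" by simp
  qed
  have g_anti: "g t \<le> g s" if "0 < s" "s \<le> t" for s t
    unfolding g_def by (rule INF_mono) (use H_anti_eps[OF A that] in blast)
  have SG: "(SUP \<epsilon>\<in>{0<..}. g \<epsilon>) = top_entropy f X"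
  proof (rule antisym)
    show "(SUP \<epsilon>\<in>{0<..}. g \<epsilon>) \<le> top_entropy f X"
      using gN assms(4) by (intro SUP_least) simp
    show "top_entropy f X \<le> (SUP \<epsilon>\<in>{0<..}. g \<epsilon>)"
      unfolding T using hg by (intro SUP_mono) auto
  qed
  have C1: "\<forall>\<epsilon>>0. ((\<lambda>\<alpha>. alpha_entropy f X \<alpha> \<epsilon>)
              \<longlongrightarrow> Lim (at_right 0) (\<lambda>\<alpha>. alpha_entropy f X \<alpha> \<epsilon>)) (at_right 0)"
    using Hlim HLim by simp
  have "(g \<longlongrightarrow> top_entropy f X) (at_right 0)"
    using anti_at_right_SUP[of g] g_anti SG by simp
  then have C2: "((\<lambda>\<epsilon>. Lim (at_right 0) (\<lambda>\<alpha>. alpha_entropy f X \<alpha> \<epsilon>))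
              \<longlongrightarrow> top_entropy f X) (at_right 0)"
  proof (rule Lim_transform_eventually)
    show "eventually (\<lambda>\<epsilon>. g \<epsilon> = Lim (at_right 0) (\<lambda>\<alpha>. alpha_entropy f X \<alpha> \<epsilon>)) (at_right 0)"
      using eventually_at_right_less[of "0::real"] by (rule eventually_mono) (simp add: HLim)
  qed
  have C3: "top_entropy f X = (SUP \<epsilon>\<in>{0<..}. INF \<alpha>\<in>{0<..}. alpha_entropy f X \<alpha> \<epsilon>)"
    using SG unfolding g_def by simp
  show ?thesis using C1 C2 C3 by blast
qed

end
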